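(* Let $n\ge 2$ and let $\mathbf{x}=(x_1,\dots,x_n)\in\mathbb{R}^n$ be a vector whose entries are either all strictly positive or all strictly negative. Let $M$ be either $M=\mathbf{x}^T\mathbf{x}$ (a positive rank one matrix) or $M=-\mathbf{x}^T\mathbf{x}$ (a negative rank one matrix), and assume the off-diagonal entries $M_{ij}$, $i<j$, are pairwise distinct. Then for every $k>0$ and every $t\in[0,1]$, the $k$-th Betti curve of $M$ satisfies $\beta_k(t)=0$.
   Context: Betti curves of a symmetric matrix. Let $M$ be a real symmetric $n\times n$ matrix whose $\binom{n}{2}$ off-diagonal entries $M_{ij}$ ($i<j$) are pairwise distinct. The ordering matrix $\widehat{M}$ is defined by $\widehat{M}_{ij}=k$ if $M_{ij}$ is the $k$-th smallest off-diagonal entry. For $t\in[0,1]$, $G_t=G_t(M)$ is the graph on vertex set $\{1,\dots,n\}$ with edge set $\{\{i,j\} : \widehat{M}_{ij}\le t\binom{n}{2}\}$ (so edges are added in increasing order of the entries $M_{ij}$; $G_0$ has no edges and $G_1$ is complete). $X(G_t)$ is the clique complex of $G_t$ (every $k$-clique of $G_t$ is filled in by a $(k-1)$-dimensional simplex). The $i$-th Betti curve of $M$ is $\beta_i(t)=\operatorname{rank} H_i(X(G_t);\mathbf{k})$, with $H_i$ simplicial homology with coefficients in a fixed field $\mathbf{k}$. Here $\mathbf{x}$ is a row vector, so $\mathbf{x}^T\mathbf{x}$ is the $n\times n$ matrix with entries $x_ix_j$. *)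

theory Defs
  imports Complex_Main "HOL-Library.Function_Algebras"
begin

text \<open>Chains are functions from (nonempty finite) vertex sets to the coefficient
field 'k; a simplex is oriented by the increasing order of its (natural number) vertices.\<close>

definition fscale :: "'k::field \<Rightarrow> ('a \<Rightarrow> 'k) \<Rightarrow> ('a \<Rightarrow> 'k)" where
  "fscale c f = (\<lambda>v. c * f v)"

lemma vector_space_fscale: "vector_space (fscale :: 'k::field \<Rightarrow> ('a \<Rightarrow> 'k) \<Rightarrow> _)"
  by unfold_locales (auto simp: fscale_def algebra_simps fun_eq_iff)

definition simplices :: "nat set set \<Rightarrow> nat \<Rightarrow> nat set set" where
  "simplices K k = {\<sigma> \<in> K. card \<sigma> = k + 1}"

text \<open>Incidence number [sigma : tau]: if tau is sigma with its i-th vertex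
(in increasing order, counting from 0) removed, it is (-1)^i; otherwise 0.\<close>
definition incidence :: "nat set \<Rightarrow> nat set \<Rightarrow> 'k::field" where
  "incidence \<sigma> \<tau> =
     (if finite \<sigma> \<and> \<tau> \<noteq> {} \<and> \<tau> \<subseteq> \<sigma> \<and> card \<sigma> = card \<tau> + 1
      then (- 1) ^ card {v \<in> \<sigma>. v < the_elem (\<sigma> - \<tau>)} else 0)"

definition chains :: "nat set set \<Rightarrow> nat \<Rightarrow> (nat set \<Rightarrow> 'k::field) set" where
  "chains K k = {f. \<forall>\<sigma>. f \<sigma> \<noteq> 0 \<longrightarrow> \<sigma> \<in> simplices K k}"

definition boundary :: "nat set set \<Rightarrow> nat \<Rightarrow> (nat set \<Rightarrow> 'k::field) \<Rightarrow> (nat set \<Rightarrow> 'k)" where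
  "boundary K k f = (\<lambda>\<tau>. \<Sum>\<sigma>\<in>simplices K k. f \<sigma> * incidence \<sigma> \<tau>)"

definition cycles :: "nat set set \<Rightarrow> nat \<Rightarrow> (nat set \<Rightarrow> 'k::field) set" where
  "cycles K k = {f \<in> chains K k. boundary K k f = (\<lambda>_. 0)}"

definition boundaries :: "nat set set \<Rightarrow> nat \<Rightarrow> (nat set \<Rightarrow> 'k::field) set" where
  "boundaries K k = boundary K (k + 1) ` chains K (k + 1)"

definition betti :: "'k::field itself \<Rightarrow> nat set set \<Rightarrow> nat \<Rightarrow> nat" where
  "betti _ K k =
     vector_space.dim (fscale :: 'k \<Rightarrow> _) (cycles K k :: (nat set \<Rightarrow> 'k) set)
     - vector_space.dim (fscale :: 'k \<Rightarrow> _) (boundaries K k :: (nat set \<Rightarrow> 'k) set)"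

definition clique_complex :: "nat \<Rightarrow> (nat \<Rightarrow> nat \<Rightarrow> bool) \<Rightarrow> nat set set" where
  "clique_complex n E = {\<sigma>. \<sigma> \<noteq> {} \<and> \<sigma> \<subseteq> {..<n} \<and> (\<forall>i\<in>\<sigma>. \<forall>j\<in>\<sigma>. i \<noteq> j \<longrightarrow> E i j)}"

text \<open>Ordering matrix: position of M i j among the off-diagonal entries (i<j).\<close>
definition order_entry :: "nat \<Rightarrow> (nat \<Rightarrow> nat \<Rightarrow> real) \<Rightarrow> nat \<Rightarrow> nat \<Rightarrow> nat" where
  "order_entry n M i j = card {(a, b). a < b \<and> b < n \<and> M a b \<le> M (min i j) (max i j)}"

definition G_t :: "nat \<Rightarrow> (nat \<Rightarrow> nat \<Rightarrow> real) \<Rightarrow> real \<Rightarrow> nat \<Rightarrow> nat \<Rightarrow> bool" where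
  "G_t n M t i j \<longleftrightarrow> i < n \<and> j < n \<and> i \<noteq> j \<and>
     real (order_entry n M i j) \<le> t * real (n choose 2)"

definition betti_curve :: "'k::field itself \<Rightarrow> nat \<Rightarrow> (nat \<Rightarrow> nat \<Rightarrow> real) \<Rightarrow> nat \<Rightarrow> real \<Rightarrow> nat" where
  "betti_curve K n M k t = betti K (clique_complex n (G_t n M t)) k"

end

theory Submission
  imports Defs
begin

lemma inc_insert:
  assumes "finite S" "S \<noteq> {}" "a \<notin> S"
  shows "(incidence (insert a S) S :: 'k::field) = (-1) ^ card {u\<in>S. u < a}"
proof -
  have "insert a S - S = {a}" using assms by auto
  moreover have "{u \<in> insert a S. u < a} = {u\<in>S. u < a}" by auto
  ultimately show ?thesis using assms unfolding incidence_def by (auto simp: card_insert_if)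
qed

lemma inc_sq: assumes "finite S" "S \<noteq> {}" "a \<notin> S"
  shows "(incidence (insert a S) S :: 'k::field) * incidence (insert a S) S = 1"
  using assms by (simp add: inc_insert power_mult_distrib[symmetric] power_add[symmetric] flip: power_add)

lemma inc_zero:
  assumes "(incidence \<sigma> \<rho> :: 'k::field) \<noteq> 0"
  shows "\<exists>w. w \<notin> \<rho> \<and> \<sigma> = insert w \<rho>"
proof -
  from assms have h: "finite \<sigma>" "\<rho> \<subseteq> \<sigma>" "card \<sigma> = card \<rho> + 1" unfolding incidence_def by (auto split: if_splits)
  have "finite \<rho>" using h finite_subset by blast
  have "card (\<sigma> - \<rho>) = 1" using h \<open>finite \<rho>\<close> by (simp add: card_Diff_subset)
  then obtain w where "\<sigma> - \<rho> = {w}" by (auto simp: card_Suc_eq)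
  thus ?thesis using h by blast
qed

lemma card_lt_insert:
  assumes "finite S" "w \<notin> S" "w \<noteq> v"
  shows "card {u \<in> insert w S. u < v} = card {u\<in>S. u < v} + (if w < v then 1 else 0)"
proof -
  have "{u \<in> insert w S. u < v} = (if w < v then insert w {u\<in>S. u < v} else {u\<in>S. u < v})" by auto
  thus ?thesis using assms by auto
qed

lemma sign_identity:
  assumes "finite S" "S \<noteq> {}" "v \<notin> S" "w \<notin> S" "v \<noteq> w"
  shows "(incidence (insert w (insert v S)) (insert w S) :: 'k::field)
          * incidence (insert w (insert v S)) (insert v S)
       = - (incidence (insert w S) S * incidence (insert v S) S)"
proof -
  have e: "insert w (insert v S) = insert v (insert w S)" by auto
  have 1: "(incidence (insert w (insert v S)) (insert w S) :: 'k) = (-1) ^ (card {u\<in>S. u < v} + (if w < v then 1 else 0))"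
  proof -
    have "(incidence (insert v (insert w S)) (insert w S) :: 'k) = (-1)^card{u\<in>insert w S. u<v}"
      by (rule inc_insert) (use assms in auto)
    thus ?thesis unfolding e using card_lt_insert[of S w v] assms by simp
  qed
  have 2: "(incidence (insert w (insert v S)) (insert v S) :: 'k) = (-1) ^ (card {u\<in>S. u < w} + (if v < w then 1 else 0))"
  proof -
    have "(incidence (insert w (insert v S)) (insert v S) :: 'k) = (-1)^card{u\<in>insert v S. u<w}"
      by (rule inc_insert) (use assms in auto)
    thus ?thesis using card_lt_insert[of S v w] assms by simp
  qed
  show ?thesis unfolding 1 2 using assms
    by (cases "v < w") (auto simp: inc_insert power_add)
qed


lemma finite_simplices: assumes "\<forall>\<sigma>\<in>K. \<sigma> \<subseteq> {..<n}" shows "finite (simplices K k)"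
proof -
  have "simplices K k \<subseteq> Pow {..<n}" using assms unfolding simplices_def by auto
  thus ?thesis by (rule finite_subset) simp
qed

lemma boundary_at:
  assumes K: "\<forall>\<sigma>\<in>K. \<sigma> \<subseteq> {..<n}" and f: "f \<in> chains K k"
  shows "boundary K k f \<rho> = (\<Sum>w\<in>{..<n}-\<rho>. f (insert w \<rho>) * (incidence (insert w \<rho>) \<rho> :: 'k::field))"
proof -
  define h where "h \<sigma> = f \<sigma> * (incidence \<sigma> \<rho> :: 'k)" for \<sigma>
  define W where "W = {..<n} - \<rho>"
  define A where "A = simplices K k \<inter> (\<lambda>w. insert w \<rho>) ` W"
  have fin: "finite (simplices K k)" using K by (rule finite_simplices)
  have "boundary K k f \<rho> = sum h (simplices K k)" unfolding boundary_def h_def by simp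
  also have "\<dots> = sum h A"
  proof (rule sum.mono_neutral_right[OF fin])
    show "A \<subseteq> simplices K k" unfolding A_def by auto
    show "\<forall>i\<in>simplices K k - A. h i = 0"
    proof
      fix \<sigma> assume s: "\<sigma> \<in> simplices K k - A"
      show "h \<sigma> = 0"
      proof (rule ccontr)
        assume "h \<sigma> \<noteq> 0"
        then have "(incidence \<sigma> \<rho> :: 'k) \<noteq> 0" unfolding h_def by auto
        then obtain w where w: "w \<notin> \<rho>" "\<sigma> = insert w \<rho>" using inc_zero by blast
        have "\<sigma> \<subseteq> {..<n}" using s K unfolding simplices_def by auto
        then have "w \<in> W" using w unfolding W_def by auto
        then show False using s w unfolding A_def by auto
      qed
    qed
  qed
  also have "\<dots> = sum h ((\<lambda>w. insert w \<rho>) ` W)"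
  proof (rule sum.mono_neutral_left)
    show "finite ((\<lambda>w. insert w \<rho>) ` W)" unfolding W_def by simp
    show "A \<subseteq> (\<lambda>w. insert w \<rho>) ` W" unfolding A_def by auto
    show "\<forall>i\<in>(\<lambda>w. insert w \<rho>) ` W - A. h i = 0"
      using f unfolding A_def h_def chains_def by auto
  qed
  also have "\<dots> = (\<Sum>w\<in>W. h (insert w \<rho>))"
  proof (rule sum.reindex[unfolded comp_def])
    show "inj_on (\<lambda>w. insert w \<rho>) W" unfolding W_def inj_on_def by auto
  qed
  finally show ?thesis unfolding h_def W_def .
qed


lemma cone_insert:
  assumes Esym: "\<forall>i j. E i j = E j i" and v: "v < n"
    and cone: "\<forall>i j. E i j \<and> j \<noteq> v \<longrightarrow> E v j"
    and s: "\<sigma> \<in> clique_complex n E" and c2: "card \<sigma> \<ge> 2"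
  shows "insert v \<sigma> \<in> clique_complex n E"
proof -
  have fin: "finite \<sigma>" using c2 card.infinite by fastforce
  have adj: "E v i" if "i \<in> \<sigma>" "i \<noteq> v" for i
  proof -
    have "card (\<sigma> - {i}) \<ge> 1" using c2 fin that by (simp add: card_Diff_singleton)
    then have "\<sigma> - {i} \<noteq> {}" by (metis card.empty not_one_le_zero)
    then obtain j where "j \<in> \<sigma>" "j \<noteq> i" by blast
    then have "E j i" using s that unfolding clique_complex_def by auto
    thus ?thesis using cone that by blast
  qed
  show ?thesis using s v adj Esym unfolding clique_complex_def by auto
qed

lemma cone_cycles:
  fixes E :: "nat \<Rightarrow> nat \<Rightarrow> bool"
  assumes Esym: "\<forall>i j. E i j = E j i" and v: "v < n"
    and cone: "\<forall>i j. E i j \<and> j \<noteq> v \<longrightarrow> E v j"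
    and kpos: "k > 0"
  shows "(cycles (clique_complex n E) k :: (nat set \<Rightarrow> 'k::field) set) \<subseteq> boundaries (clique_complex n E) k"
proof
  define K where "K = clique_complex n E"
  have Ksub: "\<forall>\<sigma>\<in>K. \<sigma> \<subseteq> {..<n}" unfolding K_def clique_complex_def by auto
  have A: "insert v \<sigma> \<in> K" if "\<sigma> \<in> K" "card \<sigma> \<ge> 2" for \<sigma>
    using cone_insert[OF Esym v cone] that unfolding K_def by blast
  fix z :: "nat set \<Rightarrow> 'k" assume "z \<in> cycles (clique_complex n E) k"
  then have zc: "z \<in> chains K k" and zb: "boundary K k z = (\<lambda>_. 0)" unfolding cycles_def K_def by auto
  have zs: "\<sigma> \<in> simplices K k" if "z \<sigma> \<noteq> 0" for \<sigma> using zc that unfolding chains_def by auto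
  define c where "c \<tau> = (if v \<in> \<tau> \<and> \<tau> \<in> simplices K (k+1) then incidence \<tau> (\<tau> - {v}) * z (\<tau> - {v}) else 0)" for \<tau>
  have cc: "c \<in> chains K (k+1)" unfolding chains_def c_def by auto
  have "boundary K (k+1) c = z"
  proof
    fix \<rho>
    define W where "W = {..<n} - \<rho>"
    have bd: "boundary K (k+1) c \<rho> = (\<Sum>w\<in>W. c (insert w \<rho>) * incidence (insert w \<rho>) \<rho>)"
      unfolding W_def by (rule boundary_at[OF Ksub cc])
    show "boundary K (k+1) c \<rho> = z \<rho>"
    proof (cases "\<rho> \<in> K")
      case False
      then have "z \<rho> = 0" using zs unfolding simplices_def by auto
      moreover have "c (insert w \<rho>) = 0" for w
      proof -
        show ?thesis
        proof (cases "\<rho> = {}")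
          case True thus ?thesis unfolding c_def simplices_def using kpos by auto
        next
          case False
          have "insert w \<rho> \<notin> K" using False \<open>\<rho> \<notin> K\<close> unfolding K_def clique_complex_def by auto
          thus ?thesis unfolding c_def simplices_def by auto
        qed
      qed
      ultimately show ?thesis using bd by simp
    next
      case True
      then have r2: "\<rho> \<noteq> {}" "\<rho> \<subseteq> {..<n}" unfolding K_def clique_complex_def by auto
      then have rfin: "finite \<rho>" "\<rho> \<noteq> {}" "\<rho> \<subseteq> {..<n}" using finite_subset[OF r2(2)] by auto
      show ?thesis
      proof (cases "v \<in> \<rho>")
        case False
        have vW: "v \<in> W" using False v unfolding W_def by auto
        have "boundary K (k+1) c \<rho> = c (insert v \<rho>) * incidence (insert v \<rho>) \<rho>
               + (\<Sum>w\<in>W-{v}. c (insert w \<rho>) * incidence (insert w \<rho>) \<rho>)"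
          unfolding bd by (rule sum.remove) (use vW in \<open>auto simp: W_def\<close>)
        also have "(\<Sum>w\<in>W-{v}. c (insert w \<rho>) * incidence (insert w \<rho>) \<rho>) = 0"
          using False unfolding c_def by (intro sum.neutral) auto
        also have "c (insert v \<rho>) * incidence (insert v \<rho>) \<rho> = z \<rho>"
        proof (cases "z \<rho> = 0")
          case True thus ?thesis unfolding c_def using False by (simp add: insert_Diff_if)
        next
          case nz: False
          then have "\<rho> \<in> simplices K k" by (rule zs)
          then have cr: "card \<rho> = k + 1" unfolding simplices_def by auto
          have "insert v \<rho> \<in> K" using A[OF True] cr kpos by auto
          moreover have "card (insert v \<rho>) = k + 2" using cr False rfin by simp
          ultimately have "insert v \<rho> \<in> simplices K (k+1)" unfolding simplices_def by auto
          then have "c (insert v \<rho>) = incidence (insert v \<rho>) \<rho> * z \<rho>"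
            unfolding c_def using False by simp
          then have "c (insert v \<rho>) * incidence (insert v \<rho>) \<rho> = z \<rho> * (incidence (insert v \<rho>) \<rho> * incidence (insert v \<rho>) \<rho>)"
            by (simp only: ac_simps)
          thus ?thesis using inc_sq[OF rfin(1,2) False, where 'k='k] by simp
        qed
        finally show ?thesis by simp
      next
        case True
        define S where "S = \<rho> - {v}"
        have rS: "\<rho> = insert v S" "v \<notin> S" "finite S" using True rfin unfolding S_def by auto
        show ?thesis
        proof (cases "S = {}")
          case True
          then have "z \<rho> = 0" using zs kpos rS unfolding simplices_def by fastforce
          moreover have "c (insert w \<rho>) = 0" for w
          proof -
            have "z (insert w \<rho> - {v}) = 0"
            proof -
              have "card (insert w \<rho> - {v}) \<le> 1" using rS True by (cases "w = v") auto
              thus ?thesis using zs kpos unfolding simplices_def by fastforce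
            qed
            thus ?thesis unfolding c_def by simp
          qed
          ultimately show ?thesis using bd by simp
        next
          case Sne: False
          have cw: "c (insert w \<rho>) = incidence (insert w \<rho>) (insert w S) * z (insert w S)" if "w \<in> W" for w
          proof -
            have wv: "w \<noteq> v" "w \<notin> S" using that True unfolding W_def S_def by auto
            have d: "insert w \<rho> - {v} = insert w S" using wv rS by auto
            show ?thesis
            proof (cases "z (insert w S) = 0")
              case True thus ?thesis unfolding c_def d by simp
            next
              case False
              then have "insert w S \<in> simplices K k" by (rule zs)
              then have cr: "card (insert w S) = k + 1" "insert w S \<in> K" unfolding simplices_def by auto
              have "insert v (insert w S) \<in> K" using A[OF cr(2)] cr kpos by auto
              moreover have "card (insert v (insert w S)) = k + 2" using cr wv rS by simp
              moreover have "insert v (insert w S) = insert w \<rho>" using rS by auto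
              ultimately have "insert w \<rho> \<in> simplices K (k+1)" unfolding simplices_def by auto
              moreover have "v \<in> insert w \<rho>" using rS(1) by auto
              ultimately show ?thesis unfolding c_def d by simp
            qed
          qed
          have sg: "incidence (insert w \<rho>) (insert w S) * (incidence (insert w \<rho>) \<rho> :: 'k)
                 = - (incidence (insert w S) S * incidence \<rho> S)" if "w \<in> W" for w
          proof -
            have wv: "w \<noteq> v" "w \<notin> S" using that True unfolding W_def S_def by auto
            show ?thesis unfolding rS(1) by (rule sign_identity) (use rS Sne wv in auto)
          qed
          have "boundary K (k+1) c \<rho> = (\<Sum>w\<in>W. - incidence \<rho> S * (z (insert w S) * incidence (insert w S) S))"
            unfolding bd
          proof (rule sum.cong[OF refl])
            fix w assume w: "w \<in> W"
            show "c (insert w \<rho>) * incidence (insert w \<rho>) \<rho> = - incidence \<rho> S * (z (insert w S) * incidence (insert w S) S)"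
            proof -
              have "c (insert w \<rho>) * incidence (insert w \<rho>) \<rho> = (incidence (insert w \<rho>) (insert w S) * incidence (insert w \<rho>) \<rho>) * z (insert w S)"
                unfolding cw[OF w] by (simp only: ac_simps)
              also have "\<dots> = - incidence \<rho> S * (z (insert w S) * incidence (insert w S) S)"
                unfolding sg[OF w] by (simp add: ac_simps)
              finally show ?thesis .
            qed
          qed
          also have "\<dots> = - incidence \<rho> S * (\<Sum>w\<in>W. z (insert w S) * incidence (insert w S) S)"
            by (simp add: sum_distrib_left)
          also have "(\<Sum>w\<in>W. z (insert w S) * incidence (insert w S) S) = - (z \<rho> * incidence \<rho> S)"
          proof -
            have "0 = boundary K k z S" using zb by simp
            also have "\<dots> = (\<Sum>w\<in>{..<n}-S. z (insert w S) * incidence (insert w S) S)"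
              by (rule boundary_at[OF Ksub zc])
            also have "{..<n}-S = insert v W" using rS rfin v unfolding W_def by auto
            also have "(\<Sum>w\<in>insert v W. z (insert w S) * incidence (insert w S) S)
                = z \<rho> * incidence \<rho> S + (\<Sum>w\<in>W. z (insert w S) * incidence (insert w S) S)"
              using True rS unfolding W_def by (subst sum.insert) auto
            finally show ?thesis by (simp add: eq_neg_iff_add_eq_0 add.commute)
          qed
          also have "- incidence \<rho> S * - (z \<rho> * incidence \<rho> S) = z \<rho> * (incidence \<rho> S * (incidence \<rho> S :: 'k))"
            by (simp add: algebra_simps)
          also have "incidence \<rho> S * (incidence \<rho> S :: 'k) = 1"
            unfolding rS(1) by (rule inc_sq) (use rS Sne in auto)
          finally show ?thesis by simp
        qed
      qed
    qed
  qed
  then show "z \<in> boundaries (clique_complex n E) k" using cc unfolding boundaries_def K_def by auto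
qed


lemma sum_fun_apply: "(\<Sum>i\<in>A. f i) x = (\<Sum>i\<in>A. f i x)"
  by (induction A rule: infinite_finite_induct) auto

lemma chains_span:
  assumes "finite (simplices K k)"
  shows "(chains K k :: (nat set \<Rightarrow> 'k::field) set) \<subseteq>
     module.span (fscale :: 'k \<Rightarrow> _) ((\<lambda>\<sigma> \<tau>. if \<tau> = \<sigma> then 1 else 0) ` simplices K k)"
proof
  interpret V: vector_space "fscale :: 'k \<Rightarrow> (nat set \<Rightarrow> 'k) \<Rightarrow> _" by (rule vector_space_fscale)
  fix f :: "nat set \<Rightarrow> 'k" assume f: "f \<in> chains K k"
  have "f = (\<Sum>\<sigma>\<in>simplices K k. fscale (f \<sigma>) (\<lambda>\<tau>. if \<tau> = \<sigma> then 1 else 0))"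
  proof
    fix \<rho>
    show "f \<rho> = (\<Sum>\<sigma>\<in>simplices K k. fscale (f \<sigma>) (\<lambda>\<tau>. if \<tau> = \<sigma> then 1 else 0)) \<rho>"
      unfolding sum_fun_apply fscale_def using f assms unfolding chains_def
      by (cases "\<rho> \<in> simplices K k") (auto simp: if_distrib cong: if_cong)
  qed
  also have "\<dots> \<in> V.span ((\<lambda>\<sigma> \<tau>. if \<tau> = \<sigma> then 1 else 0) ` simplices K k)"
    by (intro V.span_sum V.span_scale V.span_base) auto
  finally show "f \<in> V.span ((\<lambda>\<sigma> \<tau>. if \<tau> = \<sigma> then 1 else 0) ` simplices K k)" .
qed

lemma dim_le_findim:
  assumes "vector_space scale" "Z \<subseteq> B" "B \<subseteq> module.span scale F" "finite F"
  shows "vector_space.dim scale Z \<le> vector_space.dim scale B"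
proof -
  interpret V: vector_space scale by (rule assms(1))
  obtain b where b: "b \<subseteq> B" "V.independent b" "B \<subseteq> V.span b" using V.maximal_independent_subset by blast
  have "finite b" using V.independent_span_bound[OF assms(4) b(2)] b(1) assms(3) by blast
  have "V.dim Z \<le> card b" using V.dim_le_card[OF _ \<open>finite b\<close>] assms(2) b(3) by blast
  also have "card b = V.dim B" using V.basis_card_eq_dim[OF b(1,3,2)] .
  finally show ?thesis .
qed

lemma betti_zero_cone:
  fixes E :: "nat \<Rightarrow> nat \<Rightarrow> bool"
  assumes "\<forall>i j. E i j = E j i" "v < n" "\<forall>i j. E i j \<and> j \<noteq> v \<longrightarrow> E v j" "k > 0"
  shows "betti TYPE('k::field) (clique_complex n E) k = 0"
proof -
  define K where "K = clique_complex n E"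
  have Ksub: "\<forall>\<sigma>\<in>K. \<sigma> \<subseteq> {..<n}" unfolding K_def clique_complex_def by auto
  have fs: "finite (simplices K k)" using Ksub by (rule finite_simplices)
  have Zsub: "(cycles K k :: (nat set \<Rightarrow> 'k) set) \<subseteq> boundaries K k"
    unfolding K_def by (rule cone_cycles[OF assms])
  have "(boundaries K k :: (nat set \<Rightarrow> 'k) set) \<subseteq> chains K k"
    using Zsub unfolding boundaries_def
  proof -
    have "boundary K (k+1) f \<in> chains K k" for f :: "nat set \<Rightarrow> 'k"
    proof -
      have "boundary K (k+1) f \<rho> = 0" if nr: "\<rho> \<notin> simplices K k" for \<rho>
      proof -
        have "f \<sigma> * (incidence \<sigma> \<rho> :: 'k) = 0" if s: "\<sigma> \<in> simplices K (k+1)" for \<sigma>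
        proof (rule ccontr)
          assume "f \<sigma> * (incidence \<sigma> \<rho> :: 'k) \<noteq> 0"
          then have inc: "(incidence \<sigma> \<rho> :: 'k) \<noteq> 0" by auto
          then obtain w where w: "w \<notin> \<rho>" "\<sigma> = insert w \<rho>" using inc_zero by blast
          have "\<rho> \<noteq> {}" using inc unfolding incidence_def by (auto split: if_splits)
          moreover have "\<sigma> \<in> K" "card \<sigma> = k + 2" using s unfolding simplices_def by auto
          moreover have "\<sigma> \<subseteq> {..<n}" using Ksub \<open>\<sigma> \<in> K\<close> by blast
          moreover have "finite \<rho>"
            by (rule finite_subset[of _ "{..<n}"]) (use \<open>\<sigma> \<subseteq> {..<n}\<close> w in auto)
          ultimately have "\<rho> \<in> K" "card \<rho> = k + 1" using w unfolding K_def clique_complex_def by auto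
          thus False using nr unfolding simplices_def by auto
        qed
        thus ?thesis unfolding boundary_def by (intro sum.neutral) auto
      qed
      thus ?thesis unfolding chains_def by auto
    qed
    thus "boundary K (k + 1) ` chains K (k + 1) \<subseteq> (chains K k :: (nat set \<Rightarrow> 'k) set)" by auto
  qed
  then have "V_dim_le": "vector_space.dim (fscale :: 'k \<Rightarrow> _) (cycles K k :: (nat set \<Rightarrow> 'k) set)
      \<le> vector_space.dim (fscale :: 'k \<Rightarrow> _) (boundaries K k :: (nat set \<Rightarrow> 'k) set)"
    using dim_le_findim[OF vector_space_fscale Zsub _ finite_imageI[OF fs]] chains_span[OF fs] by blast
  thus ?thesis unfolding betti_def K_def by simp
qed

lemma order_entry_mono:
  assumes "M (min a b) (max a b) \<le> M (min i j) (max i j)"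
  shows "order_entry n M a b \<le> order_entry n M i j"
  unfolding order_entry_def
proof (rule card_mono)
  show "finite {(a, b). a < b \<and> b < n \<and> M a b \<le> M (min i j) (max i j)}"
    by (rule finite_subset[of _ "{..<n} \<times> {..<n}"]) auto
  show "{(aa, ba). aa < ba \<and> ba < n \<and> M aa ba \<le> M (min a b) (max a b)} \<subseteq> {(a, b). a < b \<and> b < n \<and> M a b \<le> M (min i j) (max i j)}"
    using assms by auto
qed

theorem theorem1:
  fixes n :: nat and x :: "nat \<Rightarrow> real" and M :: "nat \<Rightarrow> nat \<Rightarrow> real"
    and k :: nat and t :: real
  assumes "n \<ge> 2"
    and "(\<forall>i<n. x i > 0) \<or> (\<forall>i<n. x i < 0)"
    and "(\<forall>i<n. \<forall>j<n. M i j = x i * x j) \<or> (\<forall>i<n. \<forall>j<n. M i j = - (x i * x j))"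
    and "\<forall>i j a b. i < j \<and> j < n \<and> a < b \<and> b < n \<and> (i, j) \<noteq> (a, b) \<longrightarrow> M i j \<noteq> M a b"
    and "k > 0"
    and "0 \<le> t" and "t \<le> 1"
  shows "betti_curve TYPE('k::field) n M k t = 0"
proof -
  have ne: "x ` {..<n} \<noteq> {}" using assms(1) by (auto simp: lessThan_empty_iff)
  obtain vmin where vmin: "vmin < n" "\<forall>i<n. x vmin \<le> x i"
  proof -
    obtain m where "m \<in> x ` {..<n}" "\<not>(\<exists>y\<in>x ` {..<n}. y < m)" using ex_min_if_finite[OF _ ne] by blast
    thus ?thesis using that by force
  qed
  obtain vmax where vmax: "vmax < n" "\<forall>i<n. x i \<le> x vmax"
  proof -
    have "Max (x ` {..<n}) \<in> x ` {..<n}" using ne by (intro Max_in) auto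
    then obtain m where "m < n" "x m = Max (x ` {..<n})" by auto
    moreover have "x i \<le> Max (x ` {..<n})" if "i < n" for i using that by (intro Max_ge) auto
    ultimately show ?thesis using that by metis
  qed
  have "\<exists>v<n. \<forall>i<n. \<forall>j<n. M v j \<le> M i j"
  proof -
    { assume p: "\<forall>i<n. x i > 0" and m: "\<forall>i<n. \<forall>j<n. M i j = x i * x j"
      have ?thesis using vmin p m by (intro exI[of _ vmin]) (auto intro: mult_right_mono) }
    moreover
    { assume p: "\<forall>i<n. x i < 0" and m: "\<forall>i<n. \<forall>j<n. M i j = x i * x j"
      have ?thesis using vmax p m by (intro exI[of _ vmax]) (auto intro: mult_right_mono_neg) }
    moreover
    { assume p: "\<forall>i<n. x i > 0" and m: "\<forall>i<n. \<forall>j<n. M i j = - (x i * x j)"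
      have ?thesis using vmax p m by (intro exI[of _ vmax]) (auto intro: mult_right_mono) }
    moreover
    { assume p: "\<forall>i<n. x i < 0" and m: "\<forall>i<n. \<forall>j<n. M i j = - (x i * x j)"
      have ?thesis using vmin p m by (intro exI[of _ vmin]) (auto intro: mult_right_mono_neg) }
    ultimately show ?thesis using assms(2,3) by blast
  qed
  then obtain v where v: "v < n" "\<forall>i<n. \<forall>j<n. M v j \<le> M i j" by blast
  have Msym: "M a b = M b a" if "a < n" "b < n" for a b
    using assms(3) that by (auto simp: mult.commute)
  have Mmm: "M (min a b) (max a b) = M a b" if "a < n" "b < n" for a b
    using Msym[OF that] by (cases "a \<le> b") (auto simp: min_def max_def)
  define E where "E = G_t n M t"
  have Esym: "\<forall>i j. E i j = E j i"
    unfolding E_def G_t_def order_entry_def by (auto simp: min.commute max.commute)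
  have cone: "\<forall>i j. E i j \<and> j \<noteq> v \<longrightarrow> E v j"
  proof (intro allI impI)
    fix i j assume h: "E i j \<and> j \<noteq> v"
    then have ij: "i < n" "j < n" "i \<noteq> j" "real (order_entry n M i j) \<le> t * real (n choose 2)"
      unfolding E_def G_t_def by auto
    have "order_entry n M v j \<le> order_entry n M i j"
      by (rule order_entry_mono) (use Mmm v ij in auto)
    then show "E v j" using ij h v unfolding E_def G_t_def by (auto intro: order_trans)
  qed
  show ?thesis unfolding betti_curve_def E_def[symmetric]
    by (rule betti_zero_cone[OF Esym v(1) cone assms(5)])
qed

end
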